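(* Let $L$ be a semiring$^\dagger$ and let $\mathcal{G}$ be a cancellative totally ordered monoid. Then the set $R(L,\mathcal{G})$, with the multiplication and addition defined below, is a semiring$^\dagger$, with unit element $\mathbb{1}_{\mathcal{G}}^{[1]}$.
   Context: A semiring$^\dagger$ ("semiring without zero") is a structure $(R,+,\cdot,\mathbb{1}_R)$ such that $(R,\cdot,\mathbb{1}_R)$ is a monoid, $(R,+)$ is an abelian semigroup, and multiplication distributes over addition on both sides; no zero element is required. A totally ordered monoid $\mathcal{G}$ is a monoid with a total order satisfying $a\le b\Rightarrow ga\le gb$ and $ag\le bg$. The set $R(L,\mathcal{G})$ is $L\times\mathcal{G}$; write $a^{[\ell]}$ for the pair $(\ell,a)$. Multiplication is $a^{[k]}\,b^{[\ell]}=(ab)^{[k\ell]}$, and addition is $a^{[k]}+b^{[\ell]}=a^{[k]}$ if $a>b$, $=b^{[\ell]}$ if $a<b$, and $=a^{[k+\ell]}$ if $a=b$. *)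

theory Defs
  imports Main
begin

text \<open>A semiring-dagger (semiring without zero) on the whole type 'a, given by its
addition, multiplication and unit.\<close>
definition semiring_dagger :: "('a \<Rightarrow> 'a \<Rightarrow> 'a) \<Rightarrow> ('a \<Rightarrow> 'a \<Rightarrow> 'a) \<Rightarrow> 'a \<Rightarrow> bool" where
  "semiring_dagger add mul one \<longleftrightarrow>
     (\<forall>a b c. mul (mul a b) c = mul a (mul b c)) \<and>
     (\<forall>a. mul one a = a \<and> mul a one = a) \<and>
     (\<forall>a b c. add (add a b) c = add a (add b c)) \<and>
     (\<forall>a b. add a b = add b a) \<and>
     (\<forall>a b c. mul a (add b c) = add (mul a b) (mul a c)) \<and>
     (\<forall>a b c. mul (add a b) c = add (mul a c) (mul b c))"

definition totally_ordered_monoid :: "('g::linorder \<Rightarrow> 'g \<Rightarrow> 'g) \<Rightarrow> 'g \<Rightarrow> bool" where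
  "totally_ordered_monoid mul one \<longleftrightarrow>
     (\<forall>a b c. mul (mul a b) c = mul a (mul b c)) \<and>
     (\<forall>a. mul one a = a \<and> mul a one = a) \<and>
     (\<forall>a b g. a \<le> b \<longrightarrow> mul g a \<le> mul g b \<and> mul a g \<le> mul b g)"

definition cancellative :: "('g \<Rightarrow> 'g \<Rightarrow> 'g) \<Rightarrow> bool" where
  "cancellative mul \<longleftrightarrow>
     (\<forall>g a b. mul g a = mul g b \<longrightarrow> a = b) \<and>
     (\<forall>g a b. mul a g = mul b g \<longrightarrow> a = b)"

text \<open>R(L,G) = L \<times> G; the pair (l, a) stands for a^[l].\<close>
definition R_mul :: "('l \<Rightarrow> 'l \<Rightarrow> 'l) \<Rightarrow> ('g \<Rightarrow> 'g \<Rightarrow> 'g) \<Rightarrow> 'l \<times> 'g \<Rightarrow> 'l \<times> 'g \<Rightarrow> 'l \<times> 'g" where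
  "R_mul mulL mulG x y = (mulL (fst x) (fst y), mulG (snd x) (snd y))"

definition R_add :: "('l \<Rightarrow> 'l \<Rightarrow> 'l) \<Rightarrow> 'l \<times> ('g::linorder) \<Rightarrow> 'l \<times> 'g \<Rightarrow> 'l \<times> 'g" where
  "R_add addL x y =
     (if snd x > snd y then x
      else if snd x < snd y then y
      else (addL (fst x) (fst y), snd x))"

end

theory Submission
  imports Defs
begin

theorem proposition3p3:
  fixes addL mulL :: "'l \<Rightarrow> 'l \<Rightarrow> 'l" and oneL :: 'l
    and mulG :: "'g::linorder \<Rightarrow> 'g \<Rightarrow> 'g" and oneG :: 'g
  assumes "semiring_dagger addL mulL oneL"
    and "totally_ordered_monoid mulG oneG"
    and "cancellative mulG"
  shows "semiring_dagger (R_add addL) (R_mul mulL mulG) (oneL, oneG)"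
proof -
  note L = assms(1)[unfolded semiring_dagger_def]
  note G = assms(2)[unfolded totally_ordered_monoid_def]
  note C = assms(3)[unfolded cancellative_def]
  have sl: "mulG g a < mulG g b" if "a < b" for g a b
    using G C that by (metis order_less_le)
  have sr: "mulG a g < mulG b g" if "a < b" for g a b
    using G C that by (metis order_less_le)
  show ?thesis
    unfolding semiring_dagger_def
  proof (intro conjI allI)
    fix a b c :: "'l \<times> 'g"
    show "R_mul mulL mulG (R_mul mulL mulG a b) c = R_mul mulL mulG a (R_mul mulL mulG b c)"
      using L G by (simp add: R_mul_def)
    show "R_add addL (R_add addL a b) c = R_add addL a (R_add addL b c)"
      using L by (auto simp: R_add_def)
    show "R_mul mulL mulG a (R_add addL b c) = R_add addL (R_mul mulL mulG a b) (R_mul mulL mulG a c)"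
      using L sl[of "snd b" "snd c" "snd a"] sl[of "snd c" "snd b" "snd a"]
      by (auto simp: R_add_def R_mul_def)
    show "R_mul mulL mulG (R_add addL a b) c = R_add addL (R_mul mulL mulG a c) (R_mul mulL mulG b c)"
      using L sr[of "snd a" "snd b" "snd c"] sr[of "snd b" "snd a" "snd c"]
      by (auto simp: R_add_def R_mul_def)
  next
    fix a b :: "'l \<times> 'g"
    show "R_add addL a b = R_add addL b a"
      using L by (auto simp: R_add_def)
  next
    fix a :: "'l \<times> 'g"
    show "R_mul mulL mulG (oneL, oneG) a = a" "R_mul mulL mulG a (oneL, oneG) = a"
      using L G by (simp_all add: R_mul_def)
  qed
qed

end
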